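(* For any compilation chain for partial programs and any trace relation ${\sim}\subseteq\mathit{Trace}_S\times\mathit{Trace}_T$ with existential and universal images $\tilde\tau,\tilde\sigma$ (lifted to hyperproperties), $\mathit{RHC}^{\sim}$ is equivalent to $\mathit{RHP}^{\tilde\tau}$. Moreover, if $\tilde\tau\circ\tilde\sigma=\mathrm{id}$ (a Galois insertion), then $\mathit{RHC}^{\sim}$ implies $\mathit{RHP}^{\tilde\sigma}$; and if $\tilde\sigma\circ\tilde\tau=\mathrm{id}$ (a Galois reflection), then $\mathit{RHP}^{\tilde\sigma}$ implies $\mathit{RHC}^{\sim}$. Here $\mathit{RHC}^{\sim}\equiv\forall P\ \forall C_T\ \exists C_S\ \forall t.\ C_T[P{\downarrow}]\rightsquigarrow t\iff(\exists s\sim t.\ C_S[P]\rightsquigarrow s)$; $\mathit{RHP}^{\tilde\tau}\equiv\forall P\ \forall H_S.\ P\models_R H_S\Rightarrow P{\downarrow}\models_R\tilde\tau(H_S)$; $\mathit{RHP}^{\tilde\sigma}\equiv\forall P\ \forall H_T.\ P\models_R\tilde\sigma(H_T)\Rightarrow P{\downarrow}\models_R H_T$.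
   Context: A compilation chain for partial programs consists of source partial programs $P$ and source contexts $C_S$, target partial programs and target contexts $C_T$, linking $C[P]$ into whole programs, sets $\mathit{Trace}_S,\mathit{Trace}_T$ of traces, semantics relations $W\rightsquigarrow t$ for whole programs, and a compiler $P\mapsto P{\downarrow}$. $\mathit{beh}(W)=\{t\mid W\rightsquigarrow t\}$. A hyperproperty is a set of sets of traces; $P\models_R H$ iff for every context $C$ at the same level, $\mathit{beh}(C[P])\in H$. The existential image of $\sim$ is $\tilde\tau(\pi)=\{t\mid\exists s.\ s\sim t\wedge s\in\pi\}$ and its universal image is $\tilde\sigma(\pi)=\{s\mid\forall t.\ s\sim t\Rightarrow t\in\pi\}$; on hyperproperties, $\tilde\tau(H_S)=\{\tilde\tau(\pi)\mid\pi\in H_S\}$ and $\tilde\sigma(H_T)=\{\tilde\sigma(\pi)\mid\pi\in H_T\}$. The identities $\tilde\tau\circ\tilde\sigma=\mathrm{id}$, $\tilde\sigma\circ\tilde\tau=\mathrm{id}$ refer to the maps on trace properties. *)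

theory Defs
  imports Main
begin

text \<open>A compilation chain is given by the parameters:
  linkS :: source context \<Rightarrow> source partial program \<Rightarrow> source whole program,
  semS  :: source whole program \<Rightarrow> source trace \<Rightarrow> bool  (W \<rightsquigarrow> s),
  linkT, semT analogously at the target level, and
  cmp  :: source partial program \<Rightarrow> target partial program.\<close>

definition beh :: "('w \<Rightarrow> 't \<Rightarrow> bool) \<Rightarrow> 'w \<Rightarrow> 't set" where
  "beh sem W = {t. sem W t}"

definition rsat :: "('c \<Rightarrow> 'p \<Rightarrow> 'w) \<Rightarrow> ('w \<Rightarrow> 't \<Rightarrow> bool) \<Rightarrow> 'p \<Rightarrow> 't set set \<Rightarrow> bool" where
  "rsat link sem P H = (\<forall>C. beh sem (link C P) \<in> H)"

definition tau :: "('s \<Rightarrow> 't \<Rightarrow> bool) \<Rightarrow> 's set \<Rightarrow> 't set" where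
  "tau rel \<pi> = {t. \<exists>s. rel s t \<and> s \<in> \<pi>}"

definition sigma :: "('s \<Rightarrow> 't \<Rightarrow> bool) \<Rightarrow> 't set \<Rightarrow> 's set" where
  "sigma rel \<pi> = {s. \<forall>t. rel s t \<longrightarrow> t \<in> \<pi>}"

definition tauH :: "('s \<Rightarrow> 't \<Rightarrow> bool) \<Rightarrow> 's set set \<Rightarrow> 't set set" where
  "tauH rel H = {tau rel \<pi> | \<pi>. \<pi> \<in> H}"

definition sigmaH :: "('s \<Rightarrow> 't \<Rightarrow> bool) \<Rightarrow> 't set set \<Rightarrow> 's set set" where
  "sigmaH rel H = {sigma rel \<pi> | \<pi>. \<pi> \<in> H}"

definition RHC where
  "RHC linkS semS linkT semT cmp rel =
     (\<forall>P CT. \<exists>CS. \<forall>t. semT (linkT CT (cmp P)) t \<longleftrightarrow> (\<exists>s. rel s t \<and> semS (linkS CS P) s))"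

definition RHP_tau where
  "RHP_tau linkS semS linkT semT cmp rel =
     (\<forall>P HS. rsat linkS semS P HS \<longrightarrow> rsat linkT semT (cmp P) (tauH rel HS))"

definition RHP_sigma where
  "RHP_sigma linkS semS linkT semT cmp rel =
     (\<forall>P HT. rsat linkS semS P (sigmaH rel HT) \<longrightarrow> rsat linkT semT (cmp P) HT)"

end

theory Submission
  imports Defs
begin

lemma rhc_beh:
  "RHC linkS semS linkT semT cmp rel =
   (\<forall>P CT. \<exists>CS. beh semT (linkT CT (cmp P)) = tau rel (beh semS (linkS CS P)))"
  unfolding RHC_def beh_def tau_def by (simp add: set_eq_iff)

lemma part1:
  "RHC linkS semS linkT semT cmp rel \<longleftrightarrow> RHP_tau linkS semS linkT semT cmp rel"
proof
  assume h: "RHC linkS semS linkT semT cmp rel"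
  show "RHP_tau linkS semS linkT semT cmp rel"
    unfolding RHP_tau_def rsat_def tauH_def
  proof (intro allI impI)
    fix P HS CT assume a: "\<forall>C. beh semS (linkS C P) \<in> HS"
    from h obtain CS where "beh semT (linkT CT (cmp P)) = tau rel (beh semS (linkS CS P))"
      unfolding rhc_beh by blast
    with a show "beh semT (linkT CT (cmp P)) \<in> {tau rel \<pi> |\<pi>. \<pi> \<in> HS}" by blast
  qed
next
  assume h: "RHP_tau linkS semS linkT semT cmp rel"
  show "RHC linkS semS linkT semT cmp rel"
    unfolding rhc_beh
  proof (intro allI)
    fix P CT
    have "rsat linkS semS P {beh semS (linkS C P) | C. True}" unfolding rsat_def by blast
    with h have "rsat linkT semT (cmp P) (tauH rel {beh semS (linkS C P) | C. True})"
      unfolding RHP_tau_def by blast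
    then show "\<exists>CS. beh semT (linkT CT (cmp P)) = tau rel (beh semS (linkS CS P))"
      unfolding rsat_def tauH_def by blast
  qed
qed

theorem theorem5p3:
  fixes linkS :: "'cs \<Rightarrow> 'ps \<Rightarrow> 'ws" and semS :: "'ws \<Rightarrow> 'ts \<Rightarrow> bool"
    and linkT :: "'ct \<Rightarrow> 'pt \<Rightarrow> 'wt" and semT :: "'wt \<Rightarrow> 'tt \<Rightarrow> bool"
    and cmp :: "'ps \<Rightarrow> 'pt" and rel :: "'ts \<Rightarrow> 'tt \<Rightarrow> bool"
  shows "(RHC linkS semS linkT semT cmp rel \<longleftrightarrow> RHP_tau linkS semS linkT semT cmp rel)
    \<and> (tau rel \<circ> sigma rel = id \<longrightarrow>
         RHC linkS semS linkT semT cmp rel \<longrightarrow> RHP_sigma linkS semS linkT semT cmp rel)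
    \<and> (sigma rel \<circ> tau rel = id \<longrightarrow>
         RHP_sigma linkS semS linkT semT cmp rel \<longrightarrow> RHC linkS semS linkT semT cmp rel)"
proof (intro conjI impI)
  show "RHC linkS semS linkT semT cmp rel \<longleftrightarrow> RHP_tau linkS semS linkT semT cmp rel"
    by (rule part1)
next
  assume gi: "tau rel \<circ> sigma rel = id" and h: "RHC linkS semS linkT semT cmp rel"
  show "RHP_sigma linkS semS linkT semT cmp rel"
    unfolding RHP_sigma_def rsat_def sigmaH_def
  proof (intro allI impI)
    fix P HT CT assume a: "\<forall>C. beh semS (linkS C P) \<in> {sigma rel \<pi> |\<pi>. \<pi> \<in> HT}"
    from h obtain CS where e: "beh semT (linkT CT (cmp P)) = tau rel (beh semS (linkS CS P))"
      unfolding rhc_beh by blast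
    from a obtain \<pi> where "\<pi> \<in> HT" "beh semS (linkS CS P) = sigma rel \<pi>" by blast
    moreover have "tau rel (sigma rel \<pi>) = \<pi>" using gi by (metis comp_apply id_apply)
    ultimately show "beh semT (linkT CT (cmp P)) \<in> HT" using e by simp
  qed
next
  assume gr: "sigma rel \<circ> tau rel = id" and h: "RHP_sigma linkS semS linkT semT cmp rel"
  show "RHC linkS semS linkT semT cmp rel"
    unfolding rhc_beh
  proof (intro allI)
    fix P CT
    let ?HT = "{tau rel (beh semS (linkS C P)) | C. True}"
    have st: "\<And>x. sigma rel (tau rel x) = x" using gr by (metis comp_apply id_apply)
    have "rsat linkS semS P (sigmaH rel ?HT)" unfolding rsat_def sigmaH_def
    proof
      fix C
      have "beh semS (linkS C P) = sigma rel (tau rel (beh semS (linkS C P)))" by (simp add: st)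
      then show "beh semS (linkS C P) \<in> {sigma rel \<pi> |\<pi>. \<pi> \<in> ?HT}" by blast
    qed
    with h have "rsat linkT semT (cmp P) ?HT" unfolding RHP_sigma_def by blast
    then show "\<exists>CS. beh semT (linkT CT (cmp P)) = tau rel (beh semS (linkS CS P))"
      unfolding rsat_def by blast
  qed
qed

end
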